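(* Let $A$ be a left brace and let $a\in\zeta_2(\star,A)$ be an element of infinite order in $(A,+)$. Let $c=a\star a$. If $c$ has infinite order in $(A,+)$, then the subbrace $\mathbf{br}(2a)$ generated by $2a$ is not an ideal of $A$.
   Context: A left brace is a set $A$ with two operations $+$ and $\cdot$ such that $(A,+)$ is an abelian group, $(A,\cdot)$ is a group, and $a(b+c)=ab+ac-a$ for all $a,b,c\in A$. Put $a\star b=ab-a-b$. A subbrace is a subset which is a subgroup of both $(A,+)$ and $(A,\cdot)$; $\mathbf{br}(x)$ is the intersection of all subbraces containing $x$. A subbrace $L$ is an ideal if $a\star z, z\star a\in L$ for all $a\in A$, $z\in L$. The $\star$-center is $\zeta(\star,A)=\{a: a\star x=x\star a=0\ \forall x\}$ (an ideal); $\zeta_2(\star,A)$ is given by $\zeta_2(\star,A)/\zeta(\star,A)=\zeta(\star,A/\zeta(\star,A))$. *)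

theory Defs
  imports "HOL-Algebra.Multiplicative_Group"
begin

text \<open>A left brace is represented on a whole type: the additive group is the
  type-class group \<open>('a, +)\<close>, and the multiplication is a separate operation \<open>m\<close>.\<close>

definition addgroup :: "('a::ab_group_add) monoid" where
  "addgroup = \<lparr>carrier = UNIV, mult = (+), one = 0\<rparr>"

definition mgroup :: "('a \<Rightarrow> 'a \<Rightarrow> 'a) \<Rightarrow> 'a monoid" where
  "mgroup m = \<lparr>carrier = UNIV, mult = m, one = (THE e. \<forall>x. m e x = x \<and> m x e = x)\<rparr>"

definition left_brace :: "('a::ab_group_add \<Rightarrow> 'a \<Rightarrow> 'a) \<Rightarrow> bool" where
  "left_brace m \<longleftrightarrow> group (mgroup m) \<and>
     (\<forall>a b c. m a (b + c) = m a b + m a c - a)"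

definition star :: "('a::ab_group_add \<Rightarrow> 'a \<Rightarrow> 'a) \<Rightarrow> 'a \<Rightarrow> 'a \<Rightarrow> 'a" where
  "star m a b = m a b - a - b"

definition subbrace :: "('a::ab_group_add \<Rightarrow> 'a \<Rightarrow> 'a) \<Rightarrow> 'a set \<Rightarrow> bool" where
  "subbrace m S \<longleftrightarrow> subgroup S addgroup \<and> subgroup S (mgroup m)"

definition br :: "('a::ab_group_add \<Rightarrow> 'a \<Rightarrow> 'a) \<Rightarrow> 'a \<Rightarrow> 'a set" where
  "br m x = \<Inter>{S. subbrace m S \<and> x \<in> S}"

definition brace_ideal :: "('a::ab_group_add \<Rightarrow> 'a \<Rightarrow> 'a) \<Rightarrow> 'a set \<Rightarrow> bool" where
  "brace_ideal m L \<longleftrightarrow> subbrace m L \<and> (\<forall>a z. z \<in> L \<longrightarrow> star m a z \<in> L \<and> star m z a \<in> L)"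

definition star_center :: "('a::ab_group_add \<Rightarrow> 'a \<Rightarrow> 'a) \<Rightarrow> 'a set" where
  "star_center m = {a. \<forall>x. star m a x = 0 \<and> star m x a = 0}"

text \<open>\<open>\<zeta>\<^sub>2\<close>: the preimage of the \<open>\<star>\<close>-center of \<open>A/\<zeta>\<close>; since \<open>(a+\<zeta>)\<star>(x+\<zeta>) = a\<star>x + \<zeta>\<close>
  in the quotient brace, this unfolds to the following.\<close>
definition star_center2 :: "('a::ab_group_add \<Rightarrow> 'a \<Rightarrow> 'a) \<Rightarrow> 'a set" where
  "star_center2 m = {a. \<forall>x. star m a x \<in> star_center m \<and> star m x a \<in> star_center m}"

end

theory Submission
  imports Defs
begin

abbreviation zm :: "int \<Rightarrow> 'a::ab_group_add \<Rightarrow> 'a" where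
  "zm i x \<equiv> x [^]\<^bsub>addgroup\<^esub> i"

lemma addgroup_group: "group (addgroup :: ('a::ab_group_add) monoid)"
  unfolding addgroup_def
  by (rule groupI) (auto simp: add.assoc intro: exI[of _ "- _"])

lemma addgroup_simps[simp]: "carrier addgroup = UNIV" "one addgroup = 0" "mult addgroup x y = x + y"
  by (simp_all add: addgroup_def)

lemma addgroup_inv: "inv\<^bsub>addgroup\<^esub> (x::'a::ab_group_add) = - x"
  by (rule group.inv_equality[OF addgroup_group]) auto

lemma zm_add: "zm (i + j) (x::'a::ab_group_add) = zm i x + zm j x"
  using group.int_pow_mult[OF addgroup_group, of x i j] by (simp add: addgroup_simps)

lemma zm_0[simp]: "zm 0 (x::'a::ab_group_add) = 0"
  by (simp add: addgroup_simps)

lemma zm_1[simp]: "zm 1 (x::'a::ab_group_add) = x"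
  using group.int_pow_1[OF addgroup_group, of x] by (simp add: addgroup_simps)

lemma zm_mult: "zm (i * j) (x::'a::ab_group_add) = zm j (zm i x)"
  using group.int_pow_pow[OF addgroup_group, of x i j] by (simp add: addgroup_simps)

lemma zm_distrib: "zm i (x + y) = zm i x + zm i (y::'a::ab_group_add)"
  using group.int_pow_mult_distrib[OF addgroup_group, of x y i] by (simp add: addgroup_simps add.commute)

lemma zm_x0[simp]: "zm i (0::'a::ab_group_add) = 0"
  using group.int_pow_one[OF addgroup_group, of i] by simp

lemma zm_neg: "zm (- i) (x::'a::ab_group_add) = - zm i x"
  using group.int_pow_neg[OF addgroup_group, of x i] by (simp add: addgroup_inv)

lemma zm_hom:
  fixes f :: "'a::ab_group_add \<Rightarrow> 'b::ab_group_add"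
  assumes "\<And>x y. f (x + y) = f x + f y"
  shows "f (zm i x) = zm i (f x)"
proof -
  have f0: "f 0 = 0" using assms[of 0 0] by simp
  have fn: "f (- y) = - f y" for y using assms[of y "-y"] f0 by (simp add: eq_neg_iff_add_eq_0 add.commute)
  show ?thesis
  proof (induction i rule: int_induct[where k=0])
    case base then show ?case by (simp add: f0)
  next
    case (step1 i) then show ?case by (simp add: zm_add assms)
  next
    case (step2 i)
    have "zm i x = zm (i - 1) x + x" using zm_add[where i="i-1" and j=1 and x=x] by simp
    then have "zm (i - 1) x = zm i x - x" by (simp add: algebra_simps)
    moreover have "zm (i - 1) (f x) = zm i (f x) - f x" using zm_add[where i="i-1" and j=1 and x="f x"] by simp
    ultimately show ?case using step2 assms[of "zm i x" "- x"] fn by simp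
  qed
qed

lemma zm_zero: "group.ord addgroup (x::'a::ab_group_add) = 0 \<Longrightarrow> zm i x = 0 \<longleftrightarrow> i = 0"
  using group.int_pow_eq_id[OF addgroup_group, of x i] by (simp add: addgroup_simps)


lemma m_star: "m x y = x + y + star m x y" by (simp add: star_def)

lemma mgroup_simps[simp]: "carrier (mgroup m) = UNIV" "mult (mgroup m) = m"
  by (simp_all add: mgroup_def)

context
  fixes m :: "'a::ab_group_add \<Rightarrow> 'a \<Rightarrow> 'a"
  assumes LB: "left_brace m"
begin

lemma grp: "group (mgroup m)" using LB by (simp add: left_brace_def)

lemma dist: "m x (y + z) = m x y + m x z - x"
  using LB by (simp add: left_brace_def)

lemma m_x0: "m x 0 = x"
  using dist[of x 0 0] by simp

lemma one_m: "one (mgroup m) = 0"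
proof -
  have "m (one (mgroup m)) x = x" for x
    using monoid.l_one[OF group.is_monoid[OF grp], of x] by simp
  then show ?thesis using m_x0[of "one (mgroup m)"] by metis
qed

lemma m_0x: "m 0 x = x"
  using monoid.l_one[OF group.is_monoid[OF grp], of x] one_m by simp

lemma m_assoc: "m (m x y) z = m x (m y z)"
  using monoid.m_assoc[OF group.is_monoid[OF grp], of x y z] by simp

lemma star_add2: "star m x (y + z) = star m x y + star m x z"
  unfolding star_def using dist[of x y z] by (simp add: algebra_simps)

lemma star_zm2: "star m x (zm i y) = zm i (star m x y)"
  by (rule zm_hom) (rule star_add2)

lemma star_0x: "star m 0 y = 0"
  by (simp add: star_def m_0x)

lemma Z1:
  assumes "z \<in> star_center m"
  shows "star m (u + z) y = star m u y"
proof -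
  have a: "m u z = u + z" "m z y = z + y"
    using assms unfolding star_center_def star_def by (auto simp: algebra_simps)
  have "m (u + z) y = m (m u z) y" using a by simp
  also have "\<dots> = m u (z + y)" using m_assoc[of u z y] a(2) by simp
  also have "\<dots> = z + m u y" using dist[of u z y] a by simp
  finally show ?thesis by (simp add: star_def)
qed

lemma Z_add:
  assumes "z1 \<in> star_center m" "z2 \<in> star_center m"
  shows "z1 + z2 \<in> star_center m"
  using assms Z1[OF assms(2), of z1] star_add2
  unfolding star_center_def by auto

lemma Z_neg:
  assumes "z \<in> star_center m"
  shows "- z \<in> star_center m"
proof -
  have "star m (- z) y = 0" for y
    using Z1[OF assms, of "-z" y] star_0x by simp
  moreover have "star m y (- z) = 0" for y
    using star_add2[of y "-z" z] assms unfolding star_center_def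
    by (simp add: star_def m_x0)
  ultimately show ?thesis unfolding star_center_def by auto
qed

lemma Z_zm:
  assumes "z \<in> star_center m"
  shows "zm i z \<in> star_center m"
proof (induction i rule: int_induct[where k=0])
  case base
  then show ?case using star_0x by (simp add: star_center_def star_def m_x0)
next
  case (step1 i) then show ?case by (simp add: zm_add Z_add assms)
next
  case (step2 i)
  have "zm (i - 1) z = zm i z + - z" using zm_add[where i="i-1" and j=1 and x=z] by simp
  then show ?case using Z_add[OF step2(2) Z_neg[OF assms]] by simp
qed

context
  fixes a :: 'a
  assumes A2: "a \<in> star_center2 m"
begin

lemma cZ: "star m a a \<in> star_center m"
  using A2 by (simp add: star_center2_def)

lemma G2: "star m (u + a) a = star m u a + star m a a"
proof -
  define s where "s = star m u a"
  define c where "c = star m a a"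
  have sZ: "s \<in> star_center m" using A2 by (simp add: star_center2_def s_def)
  have cZ': "c \<in> star_center m" using cZ by (simp add: c_def)
  have mua: "m u a = u + a + s" by (simp add: s_def star_def)
  have maa: "m a a = a + (a + c)" by (simp add: c_def star_def)
  have muc: "m u c = u + c" using cZ' by (simp add: star_center_def star_def algebra_simps)
  have "star m (u + a) a = star m (u + a + s) a" using Z1[OF sZ, of "u+a" a] by simp
  also have "\<dots> = m u (m a a) - (u + a + s) - a" using m_assoc[of u a a] mua by (simp add: star_def)
  also have "m u (m a a) = m u a + (m u a + m u c - u) - u" unfolding maa dist by simp
  finally show ?thesis using mua muc by (simp add: s_def c_def algebra_simps)
qed

lemma F3: "star m (zm i a) a = zm i (star m a a)"
proof (induction i rule: int_induct[where k=0])
  case base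
  then show ?case using star_0x by simp
next
  case (step1 i) then show ?case by (simp add: zm_add G2)
next
  case (step2 i)
  have e: "zm i a = zm (i - 1) a + a" using zm_add[where i="i-1" and j=1 and x=a] by simp
  have e2: "zm i (star m a a) = zm (i - 1) (star m a a) + star m a a" using zm_add[where i="i-1" and j=1 and x="star m a a"] by simp
  show ?case using step2 G2[of "zm (i - 1) a"] e e2 by simp
qed

lemma F4: "star m (zm i a + zm j (star m a a)) (zm p a + zm q (star m a a)) = zm (i * p) (star m a a)"
proof -
  let ?c = "star m a a"
  have "star m x ?c = 0" for x using cZ by (simp add: star_center_def)
  then have "star m x (zm p a + zm q ?c) = zm p (star m x a)" for x
    by (simp add: star_add2 star_zm2)
  moreover have "star m (zm i a + zm j ?c) a = zm i ?c"
    using Z1[OF Z_zm[OF cZ, where i=j], where u="zm i a" and y=a] F3 by simp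
  ultimately show ?thesis by (simp add: zm_mult mult.commute)
qed


lemma mS: "m (zm i a + zm j (star m a a)) (zm p a + zm q (star m a a))
   = zm (i + p) a + zm (j + q + i * p) (star m a a)"
proof -
  have "m (zm i a + zm j (star m a a)) (zm p a + zm q (star m a a)) =
     (zm i a + zm j (star m a a)) + (zm p a + zm q (star m a a)) + zm (i * p) (star m a a)"
    using F4[of i j p q] m_star[of m "zm i a + zm j (star m a a)" "zm p a + zm q (star m a a)"] by simp
  then show ?thesis by (simp add: zm_add algebra_simps)
qed

definition SS where "SS = {x. \<exists>i j. x = zm (2*i) a + zm (4*j) (star m a a)}"

lemma SS_sub: "subbrace m SS"
  unfolding subbrace_def
proof
  let ?c = "star m a a"
  show "subgroup SS addgroup"
  proof (rule subgroup.intro)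
    fix x y assume "x \<in> SS" "y \<in> SS"
    then obtain i j i' j' where "x = zm (2*i) a + zm (4*j) ?c" "y = zm (2*i') a + zm (4*j') ?c"
      unfolding SS_def by auto
    then have "x \<otimes>\<^bsub>addgroup\<^esub> y = zm (2*(i+i')) a + zm (4*(j+j')) ?c"
      by (simp add: zm_add distrib_left algebra_simps)
    then show "x \<otimes>\<^bsub>addgroup\<^esub> y \<in> SS" unfolding SS_def by blast
  next
    show "\<one>\<^bsub>addgroup\<^esub> \<in> SS" unfolding SS_def
      by (simp, rule exI[of _ 0], rule exI[of _ 0], simp)
  next
    fix x assume "x \<in> SS"
    then obtain i j where "x = zm (2*i) a + zm (4*j) ?c"
      unfolding SS_def by auto
    then have "inv\<^bsub>addgroup\<^esub> x = zm (2*(-i)) a + zm (4*(-j)) ?c"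
      using zm_neg[where i="2*i" and x=a] zm_neg[where i="4*j" and x="?c"] by (simp add: addgroup_inv)
    then show "inv\<^bsub>addgroup\<^esub> x \<in> SS" unfolding SS_def by blast
  qed simp
next
  let ?c = "star m a a"
  show "subgroup SS (mgroup m)"
  proof (rule subgroup.intro)
    fix x y assume "x \<in> SS" "y \<in> SS"
    then obtain i j i' j' where "x = zm (2*i) a + zm (4*j) ?c" "y = zm (2*i') a + zm (4*j') ?c"
      unfolding SS_def by auto
    then have "x \<otimes>\<^bsub>mgroup m\<^esub> y = zm (2*(i+i')) a + zm (4*(j+j'+i*i')) ?c"
      using mS[of "2*i" "4*j" "2*i'" "4*j'"] by (simp add: algebra_simps)
    then show "x \<otimes>\<^bsub>mgroup m\<^esub> y \<in> SS" unfolding SS_def by blast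
  next
    show "\<one>\<^bsub>mgroup m\<^esub> \<in> SS" unfolding SS_def one_m
      by (rule CollectI, rule exI[of _ 0], rule exI[of _ 0], simp)
  next
    fix x assume "x \<in> SS"
    then obtain i j where x: "x = zm (2*i) a + zm (4*j) ?c"
      unfolding SS_def by auto
    define w where "w = zm (2*(-i)) a + zm (4*(i*i-j)) ?c"
    have "m w x = zm 0 a + zm 0 ?c"
      unfolding w_def x mS by (simp add: algebra_simps)
    then have "w \<otimes>\<^bsub>mgroup m\<^esub> x = \<one>\<^bsub>mgroup m\<^esub>" by (simp add: one_m)
    then have "inv\<^bsub>mgroup m\<^esub> x = w"
      by (intro group.inv_equality[OF grp]) auto
    then show "inv\<^bsub>mgroup m\<^esub> x \<in> SS" unfolding SS_def w_def by blast
  qed simp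
qed

end
end

theorem lemma3p7:
  fixes m :: "'a::ab_group_add \<Rightarrow> 'a \<Rightarrow> 'a" and a :: 'a
  assumes "left_brace m"
    and "a \<in> star_center2 m"
    and "group.ord addgroup a = 0"
    and "group.ord addgroup (star m a a) = 0"
  shows "\<not> brace_ideal m (br m (a + a))"
proof
  let ?c = "star m a a"
  assume I: "brace_ideal m (br m (a + a))"
  have "a + a \<in> SS m a"
    unfolding SS_def[OF assms(1,2)] 
    using zm_add[where i=1 and j=1 and x=a]
    by (intro CollectI exI[of _ 1] exI[of _ 0]) simp
  then have brS: "br m (a + a) \<subseteq> SS m a"
    using SS_sub[OF assms(1,2)] unfolding br_def by blast
  have "a + a \<in> br m (a + a)" unfolding br_def by blast
  then have "star m a (a + a) \<in> br m (a + a)" using I unfolding brace_ideal_def by blast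
  then have "?c + ?c \<in> SS m a" using brS star_add2[OF assms(1)] by auto
  then obtain i j where e: "?c + ?c = zm (2*i) a + zm (4*j) ?c"
    unfolding SS_def[OF assms(1,2)] by auto
  have "?c + ?c \<in> star_center m" using Z_add[OF assms(1) cZ[OF assms(1,2)] cZ[OF assms(1,2)]] .
  then have "star m (?c + ?c) a = 0" by (simp add: star_center_def)
  moreover have "star m (zm (2*i) a + zm (4*j) ?c) a = zm (2*i) ?c"
    using F4[OF assms(1,2), of "2*i" "4*j" 1 0] by simp
  ultimately have "zm (2*i) ?c = 0" using e by simp
  then have "i = 0" using zm_zero[OF assms(4)] by simp
  then have "zm 2 ?c = zm (4*j) ?c" using e zm_add[where i=1 and j=1 and x="?c"] by simp
  then have "zm (2 + (- (4*j))) ?c = 0"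
    using zm_add[where i=2 and j="-(4*j)" and x="?c"] zm_neg[where i="4*j" and x="?c"] by simp
  then have "2 + (- (4*j)) = 0" using zm_zero[OF assms(4)] by blast
  then show False by presburger
qed

end
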